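(* Consider the differential-algebraic system with input $u\in\mathbb R^{n_g+1}$, state $(\varphi,\omega_g)$ (where $\varphi=\varphi_g+\varphi_\ell$) and output $y$: \[ \dot\varphi_g=E_g^{\top}\omega_g,\qquad M\dot\omega_g=-D\omega_g-E_g\nabla U(\varphi)+p_g^*+u,\qquad 0=-E_\ell\nabla U(\varphi)+p_\ell^*,\qquad y=\omega_g . \] Let $(\overline\varphi,\overline\omega_g)$, with $R_\varphi^{\top}\overline\varphi\in(-\tfrac{\pi}{2},\tfrac{\pi}{2})^m$, be an equilibrium of this system for some constant input $u=\overline u$, and let $\overline y=\overline\omega_g$. Then this system is output strictly incrementally passive with respect to $(\overline u,(\overline\varphi,\overline\omega_g),\overline y)$. In particular, the storage function \[ S(\varphi,\omega_g)=\tfrac12(\omega_g-\overline\omega_g)^{\top}M(\omega_g-\overline\omega_g)+U(\varphi)-U(\overline\varphi)-(\varphi-\overline\varphi)^{\top}\nabla U(\overline\varphi) \] satisfies, along solutions, \[ \dot S=-(\omega_g-\overline\omega_g)^{\top}D(\omega_g-\overline\omega_g)+(\omega_g-\overline\omega_g)^{\top}(u-\overline u). \] Moreover, $S$ has a local strict minimum at $(\overline\varphi,\overline\omega_g)$.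
   Context: Power network: $\mathcal G=(\mathcal V,\mathcal E)$ is a connected undirected graph with buses $\mathcal V=\{0,1,\dots,n\}$ and $m$ edges; each edge $\{i,j\}$ has a susceptance $\beta_{ij}<0$, and $V_i>0$ are constant voltage magnitudes. Generator buses are $\mathcal V_g=\{0,1,\dots,n_g\}$ and load buses $\mathcal V_\ell=\mathcal V\setminus\mathcal V_g$. With an arbitrary orientation of edges, $R\in\mathbb R^{(n+1)\times m}$ is the incidence matrix ($R_{ik}=1$ if $i$ is the sink of edge $k$, $-1$ if it is the source, $0$ otherwise); $\Gamma=\mathrm{diag}(\gamma_k)$ with $\gamma_k=|\beta_{ij}|V_iV_j$ for edge $k\sim\{i,j\}$. $R_\varphi\in\mathbb R^{n\times m}$ is $R$ with its first row (bus $0$) removed. $E\in\mathbb R^{(n+1)\times n}$ is defined by $E^{\top}=[-\mathbb 1_n\ \ I_n]$ and partitioned as $E^{\top}=[E_g^{\top}\ E_\ell^{\top}]$, where $E_g$ ($E_\ell$) collects the rows of $E$ indexed by $\mathcal V_g$ ($\mathcal V_\ell$). $U(\varphi)=-\mathbb 1_m^{\top}\Gamma\,\mathbf{cos}(R_\varphi^{\top}\varphi)$ (cosine elementwise), so $\nabla U(\varphi)=R_\varphi\Gamma\,\mathbf{sin}(R_\varphi^{\top}\varphi)$. $M=\mathrm{diag}(M_i)$, $D=\mathrm{diag}(D_i)$ with $M_i,D_i>0$ for $i\in\mathcal V_g$; $p_g^*\in\mathbb R^{n_g+1}$ and $p_\ell^*\in\mathbb R^{n-n_g}$ are constant vectors;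 $\varphi_g,\varphi_\ell\in\mathbb R^n$, $\varphi=\varphi_g+\varphi_\ell$, and $\varphi_\ell$ plays the role of the algebraic variable. An equilibrium for the constant input $\overline u$ is a point $(\overline\varphi,\overline\omega_g)$ with $\overline\varphi\in\mathbb R^n$ and $\overline\omega_g=\mathbb 1\omega^*$ for some $\omega^*\in\mathbb R$, satisfying $0=-D\overline\omega_g-E_g\nabla U(\overline\varphi)+p_g^*+\overline u$ and $0=-E_\ell\nabla U(\overline\varphi)+p_\ell^*$. Incremental passivity: a DAE $\dot x_o=f(x_o,x_a,u)$, $0=g(x_o,x_a)$, $y=h(x_o,u)$ with state $x=(x_o,x_a)$ is incrementally passive with respect to $(\overline u,\overline x,\overline y)$, $\overline y=h(\overline x_o,\overline u)$, if there are a continuously differentiable function $S(x)$, nonnegative on a (possibly small) state set $\mathcal X$, and a positive semidefinite matrix $Q$ such that $\dot S\le-(y-\overline y)^{\top}Q(y-\overline y)+(y-\overline y)^{\top}(u-\overline u)$ for all $x\in\mathcal X$ and all inputs $u$; it is output strictly incrementally passive if moreover $Q$ is positive definite. *)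

theory Defs
  imports "HOL-Analysis.Analysis"
begin

text \<open>Buses are 0..n, edges are 0..m-1, generator buses are 0..ng,
load buses are ng+1..n. Edge k is oriented from bus src k to bus snk k.
Vectors in R^n (angles phi) are functions nat => real, only indices < n matter;
index i of phi corresponds to bus i+1 (row i+1 of R, i.e. R with row 0 removed).
Generator vectors (omega_g, u, p_g, M, D) are indexed by buses j <= ng.
Bus-indexed vectors (p, V) use indices <= n; p restricted to generators is p_g*,
restricted to loads is p_l*.\<close>

definition incid :: "(nat \<Rightarrow> nat) \<Rightarrow> (nat \<Rightarrow> nat) \<Rightarrow> nat \<Rightarrow> nat \<Rightarrow> real" where
  "incid src snk i k = (if i = snk k then 1 else if i = src k then -1 else 0)"

definition Rphi :: "(nat \<Rightarrow> nat) \<Rightarrow> (nat \<Rightarrow> nat) \<Rightarrow> nat \<Rightarrow> nat \<Rightarrow> real" where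
  "Rphi src snk i k = incid src snk (i + 1) k"

definition RphiT :: "nat \<Rightarrow> (nat \<Rightarrow> nat) \<Rightarrow> (nat \<Rightarrow> nat) \<Rightarrow> (nat \<Rightarrow> real) \<Rightarrow> nat \<Rightarrow> real" where
  "RphiT n src snk phi k = (\<Sum>i<n. Rphi src snk i k * phi i)"

definition gam :: "(nat \<Rightarrow> nat) \<Rightarrow> (nat \<Rightarrow> nat) \<Rightarrow> (nat \<Rightarrow> real) \<Rightarrow> (nat \<Rightarrow> real) \<Rightarrow> nat \<Rightarrow> real" where
  "gam src snk beta V k = \<bar>beta k\<bar> * V (src k) * V (snk k)"

definition Upot :: "nat \<Rightarrow> nat \<Rightarrow> (nat \<Rightarrow> nat) \<Rightarrow> (nat \<Rightarrow> nat) \<Rightarrow> (nat \<Rightarrow> real) \<Rightarrow> (nat \<Rightarrow> real) \<Rightarrow> real" where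
  "Upot n m src snk g phi = - (\<Sum>k<m. g k * cos (RphiT n src snk phi k))"

definition gradU :: "nat \<Rightarrow> nat \<Rightarrow> (nat \<Rightarrow> nat) \<Rightarrow> (nat \<Rightarrow> nat) \<Rightarrow> (nat \<Rightarrow> real) \<Rightarrow> (nat \<Rightarrow> real) \<Rightarrow> nat \<Rightarrow> real" where
  "gradU n m src snk g phi i = (\<Sum>k<m. Rphi src snk i k * g k * sin (RphiT n src snk phi k))"

definition Emat :: "nat \<Rightarrow> nat \<Rightarrow> real" where
  "Emat i j = (if i = 0 then -1 else if i = j + 1 then 1 else 0)"

text \<open>(E x)_i for a bus i <= n; E_g x / E_l x are the rows i <= ng / ng < i <= n.\<close>
definition Emul :: "nat \<Rightarrow> (nat \<Rightarrow> real) \<Rightarrow> nat \<Rightarrow> real" where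
  "Emul n x i = (\<Sum>j<n. Emat i j * x j)"

definition EgT :: "nat \<Rightarrow> (nat \<Rightarrow> real) \<Rightarrow> nat \<Rightarrow> real" where
  "EgT ng w i = (\<Sum>j\<le>ng. Emat j i * w j)"

definition ElT :: "nat \<Rightarrow> nat \<Rightarrow> (nat \<Rightarrow> real) \<Rightarrow> nat \<Rightarrow> real" where
  "ElT n ng v i = (\<Sum>j\<in>{ng<..n}. Emat j i * v j)"

definition adj :: "nat \<Rightarrow> (nat \<Rightarrow> nat) \<Rightarrow> (nat \<Rightarrow> nat) \<Rightarrow> nat \<Rightarrow> nat \<Rightarrow> bool" where
  "adj m src snk a b \<longleftrightarrow> (\<exists>k<m. (src k = a \<and> snk k = b) \<or> (src k = b \<and> snk k = a))"

definition connected_graph :: "nat \<Rightarrow> nat \<Rightarrow> (nat \<Rightarrow> nat) \<Rightarrow> (nat \<Rightarrow> nat) \<Rightarrow> bool" where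
  "connected_graph n m src snk \<longleftrightarrow> (\<forall>i\<le>n. (adj m src snk)\<^sup>*\<^sup>* 0 i)"

definition is_equilibrium ::
  "nat \<Rightarrow> nat \<Rightarrow> nat \<Rightarrow> (nat \<Rightarrow> nat) \<Rightarrow> (nat \<Rightarrow> nat) \<Rightarrow> (nat \<Rightarrow> real) \<Rightarrow> (nat \<Rightarrow> real) \<Rightarrow> (nat \<Rightarrow> real)
   \<Rightarrow> (nat \<Rightarrow> real) \<Rightarrow> (nat \<Rightarrow> real) \<Rightarrow> (nat \<Rightarrow> real) \<Rightarrow> bool" where
  "is_equilibrium n m ng src snk g D p ub phib wb \<longleftrightarrow>
     (\<exists>ws. \<forall>j\<le>ng. wb j = ws) \<and>
     (\<forall>j\<le>ng. 0 = - D j * wb j - Emul n (gradU n m src snk g phib) j + p j + ub j) \<and>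
     (\<forall>i. ng < i \<and> i \<le> n \<longrightarrow> 0 = - Emul n (gradU n m src snk g phib) i + p i)"

definition is_solution ::
  "nat \<Rightarrow> nat \<Rightarrow> nat \<Rightarrow> (nat \<Rightarrow> nat) \<Rightarrow> (nat \<Rightarrow> nat) \<Rightarrow> (nat \<Rightarrow> real) \<Rightarrow> (nat \<Rightarrow> real) \<Rightarrow> (nat \<Rightarrow> real)
   \<Rightarrow> (nat \<Rightarrow> real) \<Rightarrow> real set \<Rightarrow> (real \<Rightarrow> nat \<Rightarrow> real) \<Rightarrow> (real \<Rightarrow> nat \<Rightarrow> real)
   \<Rightarrow> (real \<Rightarrow> nat \<Rightarrow> real) \<Rightarrow> (real \<Rightarrow> nat \<Rightarrow> real) \<Rightarrow> bool" where
  "is_solution n m ng src snk g M D p T phig phil w u \<longleftrightarrow>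
     (\<forall>t\<in>T.
        (\<forall>i<n. ((\<lambda>s. phig s i) has_real_derivative EgT ng (w t) i) (at t)) \<and>
        (\<forall>i<n. (\<lambda>s. phil s i) differentiable (at t)) \<and>
        (\<exists>v. \<forall>i<n. phil t i = ElT n ng v i) \<and>
        (\<forall>j\<le>ng. \<exists>wd. ((\<lambda>s. w s j) has_real_derivative wd) (at t) \<and>
            M j * wd = - D j * w t j
                       - Emul n (gradU n m src snk g (\<lambda>i. phig t i + phil t i)) j + p j + u t j) \<and>
        (\<forall>i. ng < i \<and> i \<le> n \<longrightarrow>
            0 = - Emul n (gradU n m src snk g (\<lambda>i. phig t i + phil t i)) i + p i))"

definition flat_state :: "nat \<Rightarrow> ((nat \<Rightarrow> real) \<Rightarrow> (nat \<Rightarrow> real) \<Rightarrow> real) \<Rightarrow> (nat \<Rightarrow> real) \<Rightarrow> real" where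
  "flat_state n S x = S (\<lambda>i. x i) (\<lambda>j. x (n + j))"

definition storage_C1 :: "nat \<Rightarrow> nat \<Rightarrow> ((nat \<Rightarrow> real) \<Rightarrow> (nat \<Rightarrow> real) \<Rightarrow> real) \<Rightarrow> bool" where
  "storage_C1 n ng S \<longleftrightarrow>
     (\<forall>phi1 phi2 w1 w2. (\<forall>i<n. phi1 i = phi2 i) \<and> (\<forall>j\<le>ng. w1 j = w2 j) \<longrightarrow> S phi1 w1 = S phi2 w2) \<and>
     (\<exists>P. \<forall>i < n + ng + 1.
        (\<forall>x. ((\<lambda>h. flat_state n S (x(i := x i + h))) has_real_derivative P i x) (at 0)) \<and>
        continuous_on UNIV (P i))"

definition near_state :: "nat \<Rightarrow> nat \<Rightarrow> real \<Rightarrow> (nat \<Rightarrow> real) \<Rightarrow> (nat \<Rightarrow> real) \<Rightarrow> (nat \<Rightarrow> real) \<Rightarrow> (nat \<Rightarrow> real) \<Rightarrow> bool" where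
  "near_state n ng e phib wb phi w \<longleftrightarrow> (\<forall>i<n. \<bar>phi i - phib i\<bar> < e) \<and> (\<forall>j\<le>ng. \<bar>w j - wb j\<bar> < e)"

definition pos_def :: "nat \<Rightarrow> (nat \<Rightarrow> nat \<Rightarrow> real) \<Rightarrow> bool" where
  "pos_def ng Q \<longleftrightarrow> (\<forall>x. (\<exists>j\<le>ng. x j \<noteq> 0) \<longrightarrow> (\<Sum>j\<le>ng. \<Sum>k\<le>ng. x j * Q j k * x k) > 0)"

definition out_strict_incr_passive ::
  "nat \<Rightarrow> nat \<Rightarrow> nat \<Rightarrow> (nat \<Rightarrow> nat) \<Rightarrow> (nat \<Rightarrow> nat) \<Rightarrow> (nat \<Rightarrow> real) \<Rightarrow> (nat \<Rightarrow> real) \<Rightarrow> (nat \<Rightarrow> real)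
   \<Rightarrow> (nat \<Rightarrow> real) \<Rightarrow> (nat \<Rightarrow> real) \<Rightarrow> (nat \<Rightarrow> real) \<Rightarrow> (nat \<Rightarrow> real) \<Rightarrow> bool" where
  "out_strict_incr_passive n m ng src snk g M D p ub phib wb \<longleftrightarrow>
     (\<exists>S Q X. storage_C1 n ng S \<and> pos_def ng Q \<and>
        (\<exists>e>0. \<forall>phi w. near_state n ng e phib wb phi w \<longrightarrow> (phi, w) \<in> X) \<and>
        (\<forall>(phi, w)\<in>X. S phi w \<ge> 0) \<and>
        (\<forall>T phig phil w u. open T \<longrightarrow> is_solution n m ng src snk g M D p T phig phil w u \<longrightarrow>
           (\<forall>t\<in>T. ((\<lambda>i. phig t i + phil t i), w t) \<in> X) \<longrightarrow>
           (\<forall>t\<in>T. \<exists>Sd. ((\<lambda>s. S (\<lambda>i. phig s i + phil s i) (w s)) has_real_derivative Sd) (at t) \<and>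
               Sd \<le> - (\<Sum>j\<le>ng. \<Sum>k\<le>ng. (w t j - wb j) * Q j k * (w t k - wb k))
                     + (\<Sum>j\<le>ng. (w t j - wb j) * (u t j - ub j)))))"

definition Sfun ::
  "nat \<Rightarrow> nat \<Rightarrow> nat \<Rightarrow> (nat \<Rightarrow> nat) \<Rightarrow> (nat \<Rightarrow> nat) \<Rightarrow> (nat \<Rightarrow> real) \<Rightarrow> (nat \<Rightarrow> real)
   \<Rightarrow> (nat \<Rightarrow> real) \<Rightarrow> (nat \<Rightarrow> real) \<Rightarrow> (nat \<Rightarrow> real) \<Rightarrow> (nat \<Rightarrow> real) \<Rightarrow> real" where
  "Sfun n m ng src snk g M phib wb phi w =
     (1/2) * (\<Sum>j\<le>ng. M j * (w j - wb j)\<^sup>2)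
     + Upot n m src snk g phi - Upot n m src snk g phib
     - (\<Sum>i<n. (phi i - phib i) * gradU n m src snk g phib i)"

end

theory Submission
  imports Defs
begin


lemma breg_pos:
  fixes a b :: real
  assumes a: "\<bar>a\<bar> < pi/2" and b: "\<bar>b\<bar> < pi/2" and ab: "a \<noteq> b"
  shows "cos b - cos a - sin b * (a - b) > 0"
proof -
  have dmc: "\<And>x. ((\<lambda>x. - cos x) has_real_derivative sin x) (at x)"
    by (auto intro!: derivative_eq_intros)
  show ?thesis
proof (cases "b < a")
  case True
  obtain z where z: "b < z" "z < a" "(- cos a) - (- cos b) = (a - b) * sin z"
    using MVT2[OF True, of "\<lambda>x. - cos x" sin] dmc by blast
  have "sin b < sin z" using z a b by (intro sin_monotone_2pi) auto
  hence "(a - b) * sin b < (a - b) * sin z" using True by simp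
  thus ?thesis using z by (simp add: algebra_simps)
next
  case False
  hence lt: "a < b" using ab by simp
  obtain z where z: "a < z" "z < b" "(- cos b) - (- cos a) = (b - a) * sin z"
    using MVT2[OF lt, of "\<lambda>x. - cos x" sin] dmc by blast
  have "sin z < sin b" using z a b by (intro sin_monotone_2pi) auto
  hence "(b - a) * sin z < (b - a) * sin b" using lt by simp
  thus ?thesis using z by (simp add: algebra_simps)
qed
qed

lemma breg_nonneg:
  fixes a b :: real
  assumes a: "\<bar>a\<bar> < pi/2" and b: "\<bar>b\<bar> < pi/2"
  shows "cos b - cos a - sin b * (a - b) \<ge> 0"
  using breg_pos[OF a b] by (cases "a = b") force+

definition xt :: "(nat \<Rightarrow> real) \<Rightarrow> nat \<Rightarrow> real" where
  "xt phi b = (if b = 0 then 0 else phi (b - 1))"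

lemma sum_Suc_delta:
  assumes "s \<le> n"
  shows "(\<Sum>i<n. (if Suc i = s then phi i else 0)) = xt phi s"
proof (cases "s = 0")
  case True thus ?thesis by (simp add: xt_def)
next
  case False
  hence "(\<Sum>i<n. (if Suc i = s then phi i else 0)) = (\<Sum>i<n. (if i = s - 1 then phi i else 0))"
    by (intro sum.cong) auto
  also have "\<dots> = phi (s - 1)" using False assms by (simp add: sum.delta)
  finally show ?thesis using False by (simp add: xt_def)
qed

lemma RphiT_xt:
  assumes "src k \<noteq> snk k" "src k \<le> n" "snk k \<le> n"
  shows "RphiT n src snk phi k = xt phi (snk k) - xt phi (src k)"
proof -
  have "RphiT n src snk phi k = (\<Sum>i<n. (if Suc i = snk k then phi i else 0) - (if Suc i = src k then phi i else 0))"
    unfolding RphiT_def Rphi_def incid_def using assms(1) by (intro sum.cong) auto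
  also have "\<dots> = xt phi (snk k) - xt phi (src k)"
    by (simp add: sum_subtractf sum_Suc_delta assms)
  finally show ?thesis .
qed

lemma RphiT_diff: "RphiT n src snk (\<lambda>i. a i - b i) k = RphiT n src snk a k - RphiT n src snk b k"
  unfolding RphiT_def by (simp add: sum_subtractf right_diff_distrib)

lemma sum_gradU:
  "(\<Sum>i<n. d i * gradU n m src snk g x i) = (\<Sum>k<m. g k * sin (RphiT n src snk x k) * RphiT n src snk d k)"
  unfolding gradU_def RphiT_def
  by (simp add: sum_distrib_left sum_distrib_right mult_ac sum.swap[where A="{..<n}"])

lemma graph_inj:
  assumes edges: "\<forall>k<m. src k \<le> n \<and> snk k \<le> n \<and> src k \<noteq> snk k"
    and conn: "connected_graph n m src snk"
    and eq: "\<forall>k<m. RphiT n src snk phi k = RphiT n src snk phib k"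
    and i: "i < n"
  shows "phi i = phib i"
proof -
  define d where "d = (\<lambda>i. phi i - phib i)"
  have step: "xt d a = xt d b" if ab: "adj m src snk a b" for a b
  proof -
    obtain k where k: "k < m" "(src k = a \<and> snk k = b) \<or> (src k = b \<and> snk k = a)"
      using ab unfolding adj_def by blast
    have "RphiT n src snk d k = 0" using eq k(1) unfolding d_def RphiT_diff by simp
    hence "xt d (snk k) = xt d (src k)" using RphiT_xt[of src k snk n d] edges k(1) by simp
    thus ?thesis using k(2) by auto
  qed
  have "xt d 0 = xt d b" if "(adj m src snk)\<^sup>*\<^sup>* 0 b" for b
    using that by (induction rule: rtranclp_induct) (auto dest: step)
  hence h: "xt d 0 = xt d (Suc i)" using conn i unfolding connected_graph_def by simp
  hence "xt d (Suc i) = 0" by (simp add: xt_def)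
  thus ?thesis by (simp add: xt_def d_def)
qed

lemma Sfun_expand:
  "Sfun n m ng src snk g M phib wb phi w = (1/2) * (\<Sum>j\<le>ng. M j * (w j - wb j)\<^sup>2)
     + (\<Sum>k<m. g k * (cos (RphiT n src snk phib k) - cos (RphiT n src snk phi k)
          - sin (RphiT n src snk phib k) * (RphiT n src snk phi k - RphiT n src snk phib k)))"
proof -
  have "(\<Sum>i<n. (phi i - phib i) * gradU n m src snk g phib i)
     = (\<Sum>k<m. g k * sin (RphiT n src snk phib k) * (RphiT n src snk phi k - RphiT n src snk phib k))"
    using sum_gradU[where n=n and d="\<lambda>i. phi i - phib i" and m=m and src=src and snk=snk and g=g and x=phib] by (simp add: RphiT_diff)
  moreover have "(\<Sum>k<m. g k * (cos (RphiT n src snk phib k) - cos (RphiT n src snk phi k)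
          - sin (RphiT n src snk phib k) * (RphiT n src snk phi k - RphiT n src snk phib k)))
     = (\<Sum>k<m. g k * cos (RphiT n src snk phib k)) - (\<Sum>k<m. g k * cos (RphiT n src snk phi k))
        - (\<Sum>k<m. g k * sin (RphiT n src snk phib k) * (RphiT n src snk phi k - RphiT n src snk phib k))"
    by (simp add: sum_subtractf[symmetric] algebra_simps)
  ultimately show ?thesis unfolding Sfun_def Upot_def by simp
qed

lemma aux_ineq: assumes "(A::real) < 2*e" "B < P" "C \<le> A + B" "e \<le> (P - B)/3" shows "C < P"
proof -
  have "3*e \<le> P - B" using assms(4) by simp
  thus ?thesis using assms(1-3) by linarith
qed

lemma local_min:
  assumes edges: "\<forall>k<m. src k \<le> n \<and> snk k \<le> n \<and> src k \<noteq> snk k"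
    and conn: "connected_graph n m src snk"
    and gpos: "\<forall>k<m. g k > 0"
    and M_pos: "\<forall>j\<le>ng. M j > 0"
    and angles: "\<forall>k<m. \<bar>RphiT n src snk phib k\<bar> < pi / 2"
  shows "\<exists>e>0. \<forall>phi w. near_state n ng e phib wb phi w \<longrightarrow>
     Sfun n m ng src snk g M phib wb phi w \<ge> 0 \<and>
     (((\<exists>i<n. phi i \<noteq> phib i) \<or> (\<exists>j\<le>ng. w j \<noteq> wb j)) \<longrightarrow> Sfun n m ng src snk g M phib wb phi w > 0)"
proof -
  define e where "e = Min (insert 1 ((\<lambda>k. (pi/2 - \<bar>RphiT n src snk phib k\<bar>) / 3) ` {..<m}))"
  have epos: "e > 0" unfolding e_def using angles by (subst Min_gr_iff) auto
  have ek: "e \<le> (pi/2 - \<bar>RphiT n src snk phib k\<bar>) / 3" if "k < m" for k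
    unfolding e_def using that by (intro Min_le) auto
  show ?thesis
  proof (intro exI[of _ e] conjI allI impI epos)
    fix phi w assume near: "near_state n ng e phib wb phi w"
    let ?th = "\<lambda>k. RphiT n src snk phi k" and ?tb = "\<lambda>k. RphiT n src snk phib k"
    define d where "d = (\<lambda>i. phi i - phib i)"
    have xtb: "\<bar>xt d b\<bar> < e" if "b \<le> n" for b
      using near that epos unfolding near_state_def xt_def d_def by auto
    have thk: "\<bar>?th k\<bar> < pi/2" if k: "k < m" for k
    proof -
      have "?th k - ?tb k = RphiT n src snk d k" unfolding d_def RphiT_diff by simp
      also have "\<dots> = xt d (snk k) - xt d (src k)" using edges k by (intro RphiT_xt) auto
      finally have "\<bar>?th k - ?tb k\<bar> < 2 * e" using xtb[of "snk k"] xtb[of "src k"] edges k by auto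
      moreover have "\<bar>?tb k\<bar> < pi/2" using angles k by blast
      moreover have "\<bar>?th k\<bar> \<le> \<bar>?th k - ?tb k\<bar> + \<bar>?tb k\<bar>"
        using abs_triangle_ineq[of "?th k - ?tb k" "?tb k"] by simp
      ultimately show ?thesis using ek[OF k] by (rule aux_ineq)
    qed
    have terms: "g k * (cos (?tb k) - cos (?th k) - sin (?tb k) * (?th k - ?tb k)) \<ge> 0" if k: "k < m" for k
    proof -
      have "\<bar>?tb k\<bar> < pi/2" using angles k by blast
      hence "cos (?tb k) - cos (?th k) - sin (?tb k) * (?th k - ?tb k) \<ge> 0" using breg_nonneg[OF thk[OF k]] by blast
      moreover have "g k \<ge> 0" using gpos k by auto
      ultimately show ?thesis by simp
    qed
    have mterms: "M j * (w j - wb j)\<^sup>2 \<ge> 0" if "j \<le> ng" for j using M_pos that by (simp add: less_imp_le)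
    have A: "(\<Sum>j\<le>ng. M j * (w j - wb j)\<^sup>2) \<ge> 0" using mterms by (intro sum_nonneg) auto
    have B: "(\<Sum>k<m. g k * (cos (?tb k) - cos (?th k) - sin (?tb k) * (?th k - ?tb k))) \<ge> 0"
      using terms by (intro sum_nonneg) auto
    show "Sfun n m ng src snk g M phib wb phi w \<ge> 0" unfolding Sfun_expand using A B by simp
    assume diff: "(\<exists>i<n. phi i \<noteq> phib i) \<or> (\<exists>j\<le>ng. w j \<noteq> wb j)"
    show "Sfun n m ng src snk g M phib wb phi w > 0"
    proof (cases "\<exists>j\<le>ng. w j \<noteq> wb j")
      case True
      then obtain j where j: "j \<le> ng" "w j \<noteq> wb j" by blast
      have "M j * (w j - wb j)\<^sup>2 > 0" using M_pos j by simp
      hence "(\<Sum>j\<le>ng. M j * (w j - wb j)\<^sup>2) > 0"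
        using j mterms by (intro sum_pos2[where i=j]) auto
      thus ?thesis unfolding Sfun_expand using B by simp
    next
      case False
      hence "\<exists>i<n. phi i \<noteq> phib i" using diff by blast
      hence "\<exists>k<m. ?th k \<noteq> ?tb k" using graph_inj[OF edges conn, of phi phib] by blast
      then obtain k where k: "k < m" "?th k \<noteq> ?tb k" by blast
      have "g k * (cos (?tb k) - cos (?th k) - sin (?tb k) * (?th k - ?tb k)) > 0"
      proof -
        have "\<bar>?tb k\<bar> < pi/2" using angles k by blast
        hence "cos (?tb k) - cos (?th k) - sin (?tb k) * (?th k - ?tb k) > 0" using breg_pos[OF thk[OF k(1)] _ k(2)] by blast
        moreover have "g k > 0" using gpos k by auto
        ultimately show ?thesis by simp
      qed
      hence "(\<Sum>k<m. g k * (cos (?tb k) - cos (?th k) - sin (?tb k) * (?th k - ?tb k))) > 0"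
        using k terms by (intro sum_pos2[where i=k]) auto
      thus ?thesis unfolding Sfun_expand using A by simp
    qed
  qed
qed

lemma Emul_diff: "Emul n (\<lambda>i. a i - b i) j = Emul n a j - Emul n b j"
  unfolding Emul_def by (simp add: sum_subtractf right_diff_distrib)

lemma sum_ElT: "(\<Sum>i<n. c i * ElT n ng v i) = (\<Sum>j\<in>{ng<..n}. v j * Emul n c j)"
  unfolding ElT_def Emul_def
  by (simp add: sum_distrib_left sum_distrib_right mult_ac sum.swap[where A="{..<n}"])

lemma sum_EgT: "(\<Sum>i<n. c i * EgT ng w i) = (\<Sum>j\<le>ng. w j * Emul n c j)"
  unfolding EgT_def Emul_def
  by (simp add: sum_distrib_left sum_distrib_right mult_ac sum.swap[where A="{..<n}"])

lemma Emat_colsum: assumes "i < n" shows "(\<Sum>j\<le>n. Emat j i) = 0"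
proof -
  have "(\<Sum>j\<le>n. Emat j i) = (\<Sum>j\<le>n. (if j = 0 then -1 else 0) + (if j = Suc i then 1 else 0))"
    unfolding Emat_def by (intro sum.cong) auto
  also have "\<dots> = 0" using assms by (simp add: sum.distrib)
  finally show ?thesis .
qed

lemma Emul_sum: "(\<Sum>j\<le>n. Emul n c j) = 0"
proof -
  have "(\<Sum>j\<le>n. Emul n c j) = (\<Sum>i<n. c i * (\<Sum>j\<le>n. Emat j i))"
    unfolding Emul_def by (simp add: sum_distrib_left mult_ac sum.swap[where A="{..n}"])
  also have "\<dots> = 0" by (simp add: Emat_colsum)
  finally show ?thesis .
qed

lemma Emul_sum_gen:
  assumes "ng \<le> n" "\<forall>j. ng < j \<and> j \<le> n \<longrightarrow> Emul n c j = 0"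
  shows "(\<Sum>j\<le>ng. Emul n c j) = 0"
proof -
  have "{..n} = {..ng} \<union> {ng<..n}" using assms(1) by auto
  hence "(\<Sum>j\<le>n. Emul n c j) = (\<Sum>j\<le>ng. Emul n c j) + (\<Sum>j\<in>{ng<..n}. Emul n c j)"
    by (simp add: sum.union_disjoint ivl_disj_int)
  moreover have "(\<Sum>j\<in>{ng<..n}. Emul n c j) = 0" using assms(2) by (intro sum.neutral) auto
  ultimately show ?thesis using Emul_sum[of n c] by simp
qed

lemma deriv_along:
  assumes ng_le: "ng \<le> n"
    and equil: "is_equilibrium n m ng src snk g D p ub phib wb"
    and T: "open T" and sol: "is_solution n m ng src snk g M D p T phig phil w u" and t: "t \<in> T"
  shows "((\<lambda>s. Sfun n m ng src snk g M phib wb (\<lambda>i. phig s i + phil s i) (w s))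
                has_real_derivative
                  (- (\<Sum>j\<le>ng. D j * (w t j - wb j)\<^sup>2) + (\<Sum>j\<le>ng. (w t j - wb j) * (u t j - ub j)))) (at t)"
proof -
  define phi where "phi = (\<lambda>s i. phig s i + phil s i)"
  define dl where "dl = (\<lambda>i. deriv (\<lambda>s. phil s i) t)"
  define dphi where "dphi = (\<lambda>i. EgT ng (w t) i + dl i)"
  from sol t have dg: "\<And>i. i < n \<Longrightarrow> ((\<lambda>s. phig s i) has_real_derivative EgT ng (w t) i) (at t)"
    and dlx: "\<And>i. i < n \<Longrightarrow> (\<lambda>s. phil s i) differentiable (at t)"
    and wdx: "\<forall>j\<le>ng. \<exists>wd. ((\<lambda>s. w s j) has_real_derivative wd) (at t) \<and>
            M j * wd = - D j * w t j
                       - Emul n (gradU n m src snk g (\<lambda>i. phig t i + phil t i)) j + p j + u t j"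
    and alg: "\<And>i. ng < i \<and> i \<le> n \<Longrightarrow> 0 = - Emul n (gradU n m src snk g (\<lambda>i. phig t i + phil t i)) i + p i"
    unfolding is_solution_def by blast+
  have dl': "\<And>i. i < n \<Longrightarrow> ((\<lambda>s. phil s i) has_real_derivative dl i) (at t)"
    unfolding dl_def using dlx DERIV_deriv_iff_real_differentiable by blast
  obtain wd where wd: "\<And>j. j \<le> ng \<Longrightarrow> ((\<lambda>s. w s j) has_real_derivative wd j) (at t) \<and>
            M j * wd j = - D j * w t j
                       - Emul n (gradU n m src snk g (\<lambda>i. phig t i + phil t i)) j + p j + u t j"
    using wdx by metis
  obtain ws where ws: "\<And>j. j \<le> ng \<Longrightarrow> wb j = ws"
    and eq0: "\<And>j. j \<le> ng \<Longrightarrow> 0 = - D j * wb j - Emul n (gradU n m src snk g phib) j + p j + ub j"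
    and eql: "\<And>i. ng < i \<and> i \<le> n \<Longrightarrow> 0 = - Emul n (gradU n m src snk g phib) i + p i"
    using equil unfolding is_equilibrium_def by blast
  have dphis: "((\<lambda>s. phi s i) has_real_derivative dphi i) (at t)" if "i < n" for i
    unfolding phi_def dphi_def using dg[OF that] dl'[OF that] by (rule DERIV_add)
  have dth: "((\<lambda>s. RphiT n src snk (phi s) k) has_real_derivative RphiT n src snk dphi k) (at t)" for k
    unfolding RphiT_def by (intro DERIV_sum DERIV_cmult dphis) auto
  have dU: "((\<lambda>s. Upot n m src snk g (phi s)) has_real_derivative
       (\<Sum>k<m. g k * sin (RphiT n src snk (phi t) k) * RphiT n src snk dphi k)) (at t)"
  proof -
    have "((\<lambda>s. - (\<Sum>k<m. g k * cos (RphiT n src snk (phi s) k))) has_real_derivative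
        - (\<Sum>k<m. g k * (- sin (RphiT n src snk (phi t) k) * RphiT n src snk dphi k))) (at t)"
      by (intro DERIV_minus DERIV_sum DERIV_cmult DERIV_chain2[OF DERIV_cos] dth)
    thus ?thesis unfolding Upot_def by (simp add: sum_negf[symmetric] mult_ac)
  qed
  have dlin: "((\<lambda>s. \<Sum>i<n. (phi s i - phib i) * gradU n m src snk g phib i) has_real_derivative
       (\<Sum>i<n. dphi i * gradU n m src snk g phib i)) (at t)"
  proof -
    have "((\<lambda>s. phi s i - phib i) has_real_derivative dphi i) (at t)" if "i < n" for i
      using DERIV_diff[OF dphis[OF that] DERIV_const[of "phib i"]] by simp
    thus ?thesis by (intro DERIV_sum DERIV_cmult_right) auto
  qed
  have dw: "((\<lambda>s. \<Sum>j\<le>ng. M j * (w s j - wb j)\<^sup>2) has_real_derivative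
       (\<Sum>j\<le>ng. M j * (2 * (w t j - wb j) * wd j))) (at t)"
    by (intro DERIV_sum DERIV_cmult) (auto intro!: derivative_eq_intros wd[THEN conjunct1])
  have dS: "((\<lambda>s. Sfun n m ng src snk g M phib wb (phi s) (w s)) has_real_derivative
      (1/2) * (\<Sum>j\<le>ng. M j * (2 * (w t j - wb j) * wd j))
      + (\<Sum>k<m. g k * sin (RphiT n src snk (phi t) k) * RphiT n src snk dphi k) - 0
      - (\<Sum>i<n. dphi i * gradU n m src snk g phib i)) (at t)"
    unfolding Sfun_def by (intro DERIV_diff DERIV_add DERIV_cmult dw dU dlin DERIV_const)
  define c where "c = (\<lambda>i. gradU n m src snk g (phi t) i - gradU n m src snk g phib i)"
  define G where "G = (\<lambda>j. Emul n c j)"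
  have G_eq: "G j = Emul n (gradU n m src snk g (phi t)) j - Emul n (gradU n m src snk g phib) j" for j
    unfolding G_def c_def by (rule Emul_diff)
  have Gl: "\<forall>j. ng < j \<and> j \<le> n \<longrightarrow> Emul n c j = 0"
  proof (intro allI impI)
    fix j assume j: "ng < j \<and> j \<le> n"
    show "Emul n c j = 0" using alg[OF j] eql[OF j] G_eq[of j] unfolding G_def phi_def by simp
  qed
  have sumG: "(\<Sum>j\<le>ng. G j) = 0" unfolding G_def using Emul_sum_gen[OF ng_le Gl] .
  have s1: "(\<Sum>k<m. g k * sin (RphiT n src snk (phi t) k) * RphiT n src snk dphi k)
      - (\<Sum>i<n. dphi i * gradU n m src snk g phib i) = (\<Sum>i<n. dphi i * c i)"
    unfolding sum_gradU[symmetric] c_def by (simp add: sum_subtractf right_diff_distrib)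
  have s2: "(\<Sum>i<n. dphi i * c i) = (\<Sum>i<n. c i * EgT ng (w t) i) + (\<Sum>i<n. c i * dl i)"
    unfolding dphi_def by (simp add: sum.distrib[symmetric] algebra_simps)
  have s3: "(\<Sum>i<n. c i * dl i) = 0"
  proof -
    define f where "f = (\<lambda>s. \<Sum>i<n. c i * phil s i)"
    have df: "(f has_real_derivative (\<Sum>i<n. c i * dl i)) (at t)"
      unfolding f_def by (intro DERIV_sum DERIV_cmult dl') auto
    have f0: "f s = 0" if s: "s \<in> T" for s
    proof -
      obtain v where v: "\<forall>i<n. phil s i = ElT n ng v i" using sol s unfolding is_solution_def by blast
      have "f s = (\<Sum>i<n. c i * ElT n ng v i)" unfolding f_def using v by (intro sum.cong) auto
      also have "\<dots> = (\<Sum>j\<in>{ng<..n}. v j * Emul n c j)" by (rule sum_ElT)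
      also have "\<dots> = 0" using Gl by (intro sum.neutral) auto
      finally show ?thesis .
    qed
    have "(f has_real_derivative 0) (at t)"
      by (rule has_field_derivative_transform_within_open[OF DERIV_const T t]) (simp add: f0)
    thus ?thesis using df DERIV_unique by blast
  qed
  have s4: "(\<Sum>i<n. c i * EgT ng (w t) i) = (\<Sum>j\<le>ng. w t j * G j)"
    unfolding G_def by (rule sum_EgT)
  have per: "(1/2) * (M j * (2 * (w t j - wb j) * wd j)) + w t j * G j
     = - (D j * (w t j - wb j)\<^sup>2) + (w t j - wb j) * (u t j - ub j) + ws * G j" if j: "j \<le> ng" for j
  proof -
    have "M j * wd j = - D j * (w t j - wb j) - G j + (u t j - ub j)"
      using wd[OF j] eq0[OF j] unfolding G_eq phi_def by (simp add: algebra_simps)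
    moreover have "(1/2) * (M j * (2 * (w t j - wb j) * wd j)) = (w t j - wb j) * (M j * wd j)"
      by (simp add: algebra_simps)
    ultimately have "(1/2) * (M j * (2 * (w t j - wb j) * wd j)) = (w t j - wb j) * (- D j * (w t j - wb j) - G j + (u t j - ub j))"
      by simp
    thus ?thesis using ws[OF j] by (simp add: algebra_simps power2_eq_square)
  qed
  have "(1/2) * (\<Sum>j\<le>ng. M j * (2 * (w t j - wb j) * wd j))
      + (\<Sum>k<m. g k * sin (RphiT n src snk (phi t) k) * RphiT n src snk dphi k) - 0
      - (\<Sum>i<n. dphi i * gradU n m src snk g phib i)
      = (\<Sum>j\<le>ng. (1/2) * (M j * (2 * (w t j - wb j) * wd j)) + w t j * G j)"
    using s1 s2 s3 s4 by (simp add: sum_distrib_left sum.distrib)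
  also have "\<dots> = (\<Sum>j\<le>ng. - (D j * (w t j - wb j)\<^sup>2) + (w t j - wb j) * (u t j - ub j) + ws * G j)"
    using per by (intro sum.cong) auto
  also have "\<dots> = - (\<Sum>j\<le>ng. D j * (w t j - wb j)\<^sup>2) + (\<Sum>j\<le>ng. (w t j - wb j) * (u t j - ub j))"
    using sumG by (simp add: sum.distrib sum_negf sum_subtractf sum_distrib_left[symmetric])
  finally show ?thesis using dS unfolding phi_def by simp
qed

lemma Sfun_deriv:
  assumes dphis: "\<And>i. i < n \<Longrightarrow> ((\<lambda>s. phi s i) has_real_derivative dphi i) (at t)"
    and dws: "\<And>j. j \<le> ng \<Longrightarrow> ((\<lambda>s. w s j) has_real_derivative wd j) (at t)"
  shows "((\<lambda>s. Sfun n m ng src snk g M phib wb (phi s) (w s)) has_real_derivative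
      (1/2) * (\<Sum>j\<le>ng. M j * (2 * (w t j - wb j) * wd j))
      + (\<Sum>i<n. dphi i * (gradU n m src snk g (phi t) i - gradU n m src snk g phib i))) (at t)"
proof -
  have dth: "((\<lambda>s. RphiT n src snk (phi s) k) has_real_derivative RphiT n src snk dphi k) (at t)" for k
    unfolding RphiT_def by (intro DERIV_sum DERIV_cmult dphis) auto
  have dU: "((\<lambda>s. Upot n m src snk g (phi s)) has_real_derivative
       (\<Sum>k<m. g k * sin (RphiT n src snk (phi t) k) * RphiT n src snk dphi k)) (at t)"
  proof -
    have "((\<lambda>s. - (\<Sum>k<m. g k * cos (RphiT n src snk (phi s) k))) has_real_derivative
        - (\<Sum>k<m. g k * (- sin (RphiT n src snk (phi t) k) * RphiT n src snk dphi k))) (at t)"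
      by (intro DERIV_minus DERIV_sum DERIV_cmult DERIV_chain2[OF DERIV_cos] dth)
    thus ?thesis unfolding Upot_def by (simp add: sum_negf[symmetric] mult_ac)
  qed
  have dlin: "((\<lambda>s. \<Sum>i<n. (phi s i - phib i) * gradU n m src snk g phib i) has_real_derivative
       (\<Sum>i<n. dphi i * gradU n m src snk g phib i)) (at t)"
  proof -
    have "((\<lambda>s. phi s i - phib i) has_real_derivative dphi i) (at t)" if "i < n" for i
      using DERIV_diff[OF dphis[OF that] DERIV_const[of "phib i"]] by simp
    thus ?thesis by (intro DERIV_sum DERIV_cmult_right) auto
  qed
  have dw: "((\<lambda>s. \<Sum>j\<le>ng. M j * (w s j - wb j)\<^sup>2) has_real_derivative
       (\<Sum>j\<le>ng. M j * (2 * (w t j - wb j) * wd j))) (at t)"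
    by (intro DERIV_sum DERIV_cmult) (auto intro!: derivative_eq_intros dws)
  have dS: "((\<lambda>s. Sfun n m ng src snk g M phib wb (phi s) (w s)) has_real_derivative
      (1/2) * (\<Sum>j\<le>ng. M j * (2 * (w t j - wb j) * wd j))
      + (\<Sum>k<m. g k * sin (RphiT n src snk (phi t) k) * RphiT n src snk dphi k) - 0
      - (\<Sum>i<n. dphi i * gradU n m src snk g phib i)) (at t)"
    unfolding Sfun_def by (intro DERIV_diff DERIV_add DERIV_cmult dw dU dlin DERIV_const)
  have s1: "(\<Sum>k<m. g k * sin (RphiT n src snk (phi t) k) * RphiT n src snk dphi k)
      - (\<Sum>i<n. dphi i * gradU n m src snk g phib i) = (\<Sum>i<n. dphi i * (gradU n m src snk g (phi t) i - gradU n m src snk g phib i))"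
    unfolding sum_gradU[symmetric] by (simp add: sum_subtractf right_diff_distrib)
  show ?thesis using dS s1 by (simp add: algebra_simps)
qed

lemma Sfun_dep:
  assumes "\<forall>i<n. phi1 i = phi2 i" "\<forall>j\<le>ng. w1 j = w2 j"
  shows "Sfun n m ng src snk g M phib wb phi1 w1 = Sfun n m ng src snk g M phib wb phi2 w2"
proof -
  have "RphiT n src snk phi1 = RphiT n src snk phi2"
    unfolding RphiT_def using assms(1) by (intro ext sum.cong) auto
  moreover have "(\<Sum>i<n. (phi1 i - phib i) * gradU n m src snk g phib i) = (\<Sum>i<n. (phi2 i - phib i) * gradU n m src snk g phib i)"
    using assms(1) by (intro sum.cong) auto
  moreover have "(\<Sum>j\<le>ng. M j * (w1 j - wb j)\<^sup>2) = (\<Sum>j\<le>ng. M j * (w2 j - wb j)\<^sup>2)"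
    using assms(2) by (intro sum.cong) auto
  ultimately show ?thesis unfolding Sfun_def Upot_def by simp
qed

lemma Sfun_C1: "storage_C1 n ng (Sfun n m ng src snk g M phib wb)"
  unfolding storage_C1_def
proof (intro conjI allI impI)
  fix phi1 phi2 :: "nat \<Rightarrow> real" and w1 w2 :: "nat \<Rightarrow> real"
  assume "(\<forall>i<n. phi1 i = phi2 i) \<and> (\<forall>j\<le>ng. w1 j = w2 j)"
  thus "Sfun n m ng src snk g M phib wb phi1 w1 = Sfun n m ng src snk g M phib wb phi2 w2"
    using Sfun_dep by blast
next
  define P where "P = (\<lambda>i (x::nat\<Rightarrow>real). if i < n then gradU n m src snk g x i - gradU n m src snk g phib i
                                  else M (i - n) * (x i - wb (i - n)))"
  show "\<exists>P. \<forall>i<n + ng + 1.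
       (\<forall>x. ((\<lambda>h. flat_state n (Sfun n m ng src snk g M phib wb) (x(i := x i + h))) has_real_derivative P i x) (at 0)) \<and>
       continuous_on UNIV (P i)"
  proof (intro exI[of _ P] allI impI conjI)
    fix i and x :: "nat \<Rightarrow> real" assume i: "i < n + ng + 1"
    define y where "y = (\<lambda>h. x(i := x i + h))"
    have y0: "y 0 = x" unfolding y_def by simp
    have fl: "flat_state n (Sfun n m ng src snk g M phib wb) (x(i := x i + h))
       = Sfun n m ng src snk g M phib wb (y h) (\<lambda>j. y h (n + j))" for h
      unfolding flat_state_def y_def by simp
    show "((\<lambda>h. flat_state n (Sfun n m ng src snk g M phib wb) (x(i := x i + h))) has_real_derivative P i x) (at 0)"
    proof (cases "i < n")
      case True
      have dp: "((\<lambda>s. y s i') has_real_derivative (if i' = i then 1 else 0)) (at 0)" for i'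
        unfolding y_def by (cases "i' = i") (auto intro!: derivative_eq_intros)
      have dw: "((\<lambda>s. y s (n + j)) has_real_derivative 0) (at 0)" for j
        unfolding y_def using True by (auto intro!: derivative_eq_intros)
      have "(\<Sum>i'<n. (if i' = i then 1 else 0) * (gradU n m src snk g (y 0) i' - gradU n m src snk g phib i'))
         = (\<Sum>i'<n. (if i' = i then gradU n m src snk g (y 0) i' - gradU n m src snk g phib i' else 0))"
        by (intro sum.cong) auto
      also have "\<dots> = P i x" using True unfolding P_def y0 by (simp add: sum.delta)
      finally have "(\<Sum>i'<n. (if i' = i then 1 else 0) * (gradU n m src snk g (y 0) i' - gradU n m src snk g phib i')) = P i x" .
      moreover have "((\<lambda>s. Sfun n m ng src snk g M phib wb (y s) (\<lambda>j. y s (n + j))) has_real_derivative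
         (1/2) * (\<Sum>j\<le>ng. M j * (2 * (y 0 (n + j) - wb j) * 0))
         + (\<Sum>i'<n. (if i' = i then 1 else 0) * (gradU n m src snk g (y 0) i' - gradU n m src snk g phib i'))) (at 0)"
        by (rule Sfun_deriv[where phi=y and w="\<lambda>s j. y s (n+j)"]) (use dp dw in auto)
      ultimately show ?thesis unfolding fl by simp
    next
      case False
      define j0 where "j0 = i - n"
      have ij: "i = n + j0" "j0 \<le> ng" using False i unfolding j0_def by auto
      have dp: "((\<lambda>s. y s i') has_real_derivative 0) (at 0)" if "i' < n" for i'
        unfolding y_def using that False by (auto intro!: derivative_eq_intros)
      have dw: "((\<lambda>s. y s (n + j)) has_real_derivative (if j = j0 then 1 else 0)) (at 0)" for j
        unfolding y_def using ij by (cases "j = j0") (auto intro!: derivative_eq_intros)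
      have "(1/2) * (\<Sum>j\<le>ng. M j * (2 * (y 0 (n + j) - wb j) * (if j = j0 then 1 else 0)))
          = (1/2) * (\<Sum>j\<le>ng. (if j = j0 then M j * (2 * (y 0 (n + j) - wb j)) else 0))"
        by (intro arg_cong[where f="\<lambda>z. (1/2) * z"] sum.cong) auto
      also have "\<dots> = P i x" using False ij unfolding P_def y0 by (simp add: sum.delta)
      finally have "(1/2) * (\<Sum>j\<le>ng. M j * (2 * (y 0 (n + j) - wb j) * (if j = j0 then 1 else 0))) = P i x" .
      moreover have "((\<lambda>s. Sfun n m ng src snk g M phib wb (y s) (\<lambda>j. y s (n + j))) has_real_derivative
         (1/2) * (\<Sum>j\<le>ng. M j * (2 * (y 0 (n + j) - wb j) * (if j = j0 then 1 else 0)))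
         + (\<Sum>i'<n. 0 * (gradU n m src snk g (y 0) i' - gradU n m src snk g phib i'))) (at 0)"
        by (rule Sfun_deriv[where phi=y and w="\<lambda>s j. y s (n+j)"]) (use dp dw in auto)
      ultimately show ?thesis unfolding fl by simp
    qed
  next
    fix i assume i: "i < n + ng + 1"
    show "continuous_on UNIV (P i)"
    proof (cases "i < n")
      case True
      thus ?thesis unfolding P_def gradU_def RphiT_def by (auto intro!: continuous_intros)
    next
      case False
      thus ?thesis unfolding P_def by (auto intro!: continuous_intros)
    qed
  qed
qed



theorem proposition1:
  fixes n m ng :: nat
    and src snk :: "nat \<Rightarrow> nat"
    and beta V M D p ub phib wb :: "nat \<Rightarrow> real"
  defines "g \<equiv> gam src snk beta V"
  assumes ng_le: "ng \<le> n"
    and edges: "\<forall>k<m. src k \<le> n \<and> snk k \<le> n \<and> src k \<noteq> snk k"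
    and conn: "connected_graph n m src snk"
    and beta_neg: "\<forall>k<m. beta k < 0"
    and V_pos: "\<forall>i\<le>n. V i > 0"
    and M_pos: "\<forall>j\<le>ng. M j > 0"
    and D_pos: "\<forall>j\<le>ng. D j > 0"
    and equil: "is_equilibrium n m ng src snk g D p ub phib wb"
    and angles: "\<forall>k<m. \<bar>RphiT n src snk phib k\<bar> < pi / 2"
  shows "out_strict_incr_passive n m ng src snk g M D p ub phib wb
       \<and> (\<forall>T phig phil w u. open T \<longrightarrow> is_solution n m ng src snk g M D p T phig phil w u \<longrightarrow>
            (\<forall>t\<in>T. ((\<lambda>s. Sfun n m ng src snk g M phib wb (\<lambda>i. phig s i + phil s i) (w s))
                has_real_derivative
                  (- (\<Sum>j\<le>ng. D j * (w t j - wb j)\<^sup>2) + (\<Sum>j\<le>ng. (w t j - wb j) * (u t j - ub j)))) (at t)))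
       \<and> (\<exists>e>0. \<forall>phi w. near_state n ng e phib wb phi w
              \<and> ((\<exists>i<n. phi i \<noteq> phib i) \<or> (\<exists>j\<le>ng. w j \<noteq> wb j)) \<longrightarrow>
              Sfun n m ng src snk g M phib wb phib wb < Sfun n m ng src snk g M phib wb phi w)"
proof -
  have gpos: "\<forall>k<m. g k > 0"
  proof (intro allI impI)
    fix k assume k: "k < m"
    have "V (src k) > 0" "V (snk k) > 0" using V_pos edges k by auto
    moreover have "\<bar>beta k\<bar> > 0" using beta_neg k by auto
    ultimately show "g k > 0" unfolding g_def gam_def by simp
  qed
  obtain e where epos: "e > 0" and emin: "\<forall>phi w. near_state n ng e phib wb phi w \<longrightarrow>
     Sfun n m ng src snk g M phib wb phi w \<ge> 0 \<and>
     (((\<exists>i<n. phi i \<noteq> phib i) \<or> (\<exists>j\<le>ng. w j \<noteq> wb j)) \<longrightarrow> Sfun n m ng src snk g M phib wb phi w > 0)"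
    using local_min[OF edges conn gpos M_pos angles] by blast
  have S0: "Sfun n m ng src snk g M phib wb phib wb = 0" unfolding Sfun_def by simp
  have P2: "\<forall>T phig phil w u. open T \<longrightarrow> is_solution n m ng src snk g M D p T phig phil w u \<longrightarrow>
            (\<forall>t\<in>T. ((\<lambda>s. Sfun n m ng src snk g M phib wb (\<lambda>i. phig s i + phil s i) (w s))
                has_real_derivative
                  (- (\<Sum>j\<le>ng. D j * (w t j - wb j)\<^sup>2) + (\<Sum>j\<le>ng. (w t j - wb j) * (u t j - ub j)))) (at t))"
    using deriv_along[OF ng_le equil] by blast
  define Q where "Q = (\<lambda>j k. if j = k then D j else (0::real))"
  have Qsum: "(\<Sum>j\<le>ng. \<Sum>k\<le>ng. x j * Q j k * x k) = (\<Sum>j\<le>ng. D j * (x j)\<^sup>2)" for x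
  proof (intro sum.cong refl)
    fix j assume "j \<in> {..ng}"
    have "(\<Sum>k\<le>ng. x j * Q j k * x k) = (\<Sum>k\<le>ng. if j = k then x j * D j * x k else 0)"
      unfolding Q_def by (intro sum.cong) auto
    also have "\<dots> = D j * (x j)\<^sup>2" using \<open>j \<in> {..ng}\<close> by (simp add: sum.delta power2_eq_square)
    finally show "(\<Sum>k\<le>ng. x j * Q j k * x k) = D j * (x j)\<^sup>2" .
  qed
  have posQ: "pos_def ng Q" unfolding pos_def_def
  proof (intro allI impI)
    fix x :: "nat \<Rightarrow> real" assume "\<exists>j\<le>ng. x j \<noteq> 0"
    then obtain j where j: "j \<le> ng" "x j \<noteq> 0" by blast
    have "(\<Sum>j\<le>ng. D j * (x j)\<^sup>2) > 0"
      using j D_pos by (intro sum_pos2[where i=j]) (auto simp: less_imp_le)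
    thus "(\<Sum>j\<le>ng. \<Sum>k\<le>ng. x j * Q j k * x k) > 0" unfolding Qsum .
  qed
  have P1: "out_strict_incr_passive n m ng src snk g M D p ub phib wb"
    unfolding out_strict_incr_passive_def
  proof (intro exI[of _ "Sfun n m ng src snk g M phib wb"] exI[of _ Q]
      exI[of _ "{(phi, w). near_state n ng e phib wb phi w}"] conjI Sfun_C1 posQ)
    show "\<exists>e'>0. \<forall>phi w. near_state n ng e' phib wb phi w \<longrightarrow> (phi, w) \<in> {(phi, w). near_state n ng e phib wb phi w}"
      using epos by blast
    show "\<forall>(phi, w)\<in>{(phi, w). near_state n ng e phib wb phi w}. Sfun n m ng src snk g M phib wb phi w \<ge> 0"
      using emin by auto
    show "\<forall>T phig phil w u. open T \<longrightarrow> is_solution n m ng src snk g M D p T phig phil w u \<longrightarrow>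
           (\<forall>t\<in>T. ((\<lambda>i. phig t i + phil t i), w t) \<in> {(phi, w). near_state n ng e phib wb phi w}) \<longrightarrow>
           (\<forall>t\<in>T. \<exists>Sd. ((\<lambda>s. Sfun n m ng src snk g M phib wb (\<lambda>i. phig s i + phil s i) (w s)) has_real_derivative Sd) (at t) \<and>
               Sd \<le> - (\<Sum>j\<le>ng. \<Sum>k\<le>ng. (w t j - wb j) * Q j k * (w t k - wb k))
                     + (\<Sum>j\<le>ng. (w t j - wb j) * (u t j - ub j)))"
    proof (intro allI impI ballI)
      fix T phig phil w u t
      assume T: "open T" and sol: "is_solution n m ng src snk g M D p T phig phil w u" and t: "t \<in> T"
      show "\<exists>Sd. ((\<lambda>s. Sfun n m ng src snk g M phib wb (\<lambda>i. phig s i + phil s i) (w s)) has_real_derivative Sd) (at t) \<and>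
               Sd \<le> - (\<Sum>j\<le>ng. \<Sum>k\<le>ng. (w t j - wb j) * Q j k * (w t k - wb k))
                     + (\<Sum>j\<le>ng. (w t j - wb j) * (u t j - ub j))"
        using P2 T sol t Qsum[of "\<lambda>j. w t j - wb j"] by (intro exI conjI order_refl) auto
    qed
  qed
  have P3: "\<exists>e>0. \<forall>phi w. near_state n ng e phib wb phi w
              \<and> ((\<exists>i<n. phi i \<noteq> phib i) \<or> (\<exists>j\<le>ng. w j \<noteq> wb j)) \<longrightarrow>
              Sfun n m ng src snk g M phib wb phib wb < Sfun n m ng src snk g M phib wb phi w"
    unfolding S0 using emin epos by blast
  show ?thesis using P1 P2 P3 by blast
qed


end
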